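(* Let $a,b\ge2$ and let $\alpha,\beta$ be integers with $\alpha<-b+1$ and $\beta>a-1$. Let $M_\sigma$ be the Poisson module over $\Lambda(a,b)$ with parameters $(\alpha,\beta)$ described in the context. Then $HP_0(\Lambda(a,b),M_\sigma)\cong\mathbb C$ and $HP_2(\Lambda(a,b),M_\sigma)=0$.
   Context: For integers $a,b\geq 2$, $\Lambda(a,b):=\mathbb C[X,Y]/(X^a,Y^b)$ with basis $X^iY^j$ ($0\le i\le a-1$, $0\le j\le b-1$) and Poisson bracket determined by $\{X,Y\}=XY$. For parameters $\alpha,\beta$, $M_\sigma$ is $\Lambda(a,b)$ as a $\Lambda(a,b)$-module, with external bracket $\{-,-\}_{M_\sigma}:M_\sigma\times\Lambda(a,b)\to M_\sigma$ given by $\{X^iY^j,X\}_{M_\sigma}=-(j+\alpha)X^{i+1}Y^j$, $\{X^iY^j,Y\}_{M_\sigma}=(i-\beta)X^iY^{j+1}$ (extended linearly in the first argument and by $\{m,fg\}_{M_\sigma}=\{m,f\}_{M_\sigma}g+\{m,g\}_{M_\sigma}f$ in the second). Kähler forms: $\Omega^0=\Lambda(a,b)$; $\Omega^1=(\Lambda(a,b)dX\oplus\Lambda(a,b)dY)/(X^{a-1}dX,\ Y^{b-1}dY)$, with basis $X^iY^jdX$ ($0\le i\le a-2$, $0\le j\le b-1$) and $X^iY^jdY$ ($0\le i\le a-1$, $0\le j\le b-2$); $\Omega^2$ has basis $X^iY^j\,dX\wedge dY$ ($0\le i\le a-2$, $0\le j\le b-2$); $\Omega^k=0$ for $k\ge3$.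 The Poisson homology $HP_*(\Lambda(a,b),M)$ with coefficients in a right Poisson module $M$ is the homology of the complex $M\otimes_{\Lambda(a,b)}\Omega^k$ with boundary $$\partial_k(m\otimes da_1\wedge\dots\wedge da_k)=\sum_{i}(-1)^{i+1}\{m,a_i\}_M\otimes da_1\wedge\cdots\widehat{da_i}\cdots\wedge da_k+\sum_{i<j}(-1)^{i+j}m\otimes d\{a_i,a_j\}\wedge da_1\wedge\cdots\widehat{da_i}\cdots\widehat{da_j}\cdots\wedge da_k;$$ concretely $\partial_1(m\otimes dX)=\{m,X\}_M$, $\partial_1(m\otimes dY)=\{m,Y\}_M$, $\partial_2(m\otimes dX\wedge dY)=\{m,X\}_M\otimes dY-\{m,Y\}_M\otimes dX-(mX\otimes dY+mY\otimes dX)$. *)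

theory Defs
  imports Complex_Main
begin

text \<open>Elements of Lambda(a,b) (and of M_sigma, which is Lambda(a,b) as a module) are
  represented by their coefficient functions on the monomial basis X^i Y^j,
  i.e. functions nat \<times> nat \<Rightarrow> complex vanishing outside the box i < a, j < b.\<close>

type_synonym coeffs = "nat \<times> nat \<Rightarrow> complex"

definition box :: "nat \<Rightarrow> nat \<Rightarrow> (nat \<times> nat) set" where
  "box a b = {(i, j). i < a \<and> j < b}"

definition supported_in :: "(nat \<times> nat) set \<Rightarrow> coeffs set" where
  "supported_in S = {m. \<forall>p. p \<notin> S \<longrightarrow> m p = 0}"

text \<open>Carrier of M_sigma (= Lambda(a,b) = M tensor Omega^0).\<close>
definition Mcar :: "nat \<Rightarrow> nat \<Rightarrow> coeffs set" where
  "Mcar a b = supported_in (box a b)"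

text \<open>M tensor Omega^1 = Omega^1: pairs (dX-coefficients, dY-coefficients), with bases
  X^iY^j dX (i \<le> a-2, j \<le> b-1) and X^iY^j dY (i \<le> a-1, j \<le> b-2).\<close>
definition Om1car :: "nat \<Rightarrow> nat \<Rightarrow> (coeffs \<times> coeffs) set" where
  "Om1car a b = supported_in (box (a - 1) b) \<times> supported_in (box a (b - 1))"

text \<open>M tensor Omega^2 = Omega^2: coefficients of X^iY^j dX\<and>dY (i \<le> a-2, j \<le> b-2).\<close>
definition Om2car :: "nat \<Rightarrow> nat \<Rightarrow> coeffs set" where
  "Om2car a b = supported_in (box (a - 1) (b - 1))"

text \<open>The monomial X^i Y^j in Lambda(a,b) (zero if i \<ge> a or j \<ge> b).\<close>
definition mon :: "nat \<Rightarrow> nat \<Rightarrow> nat \<Rightarrow> nat \<Rightarrow> coeffs" where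
  "mon a b i j = (\<lambda>p. if p = (i, j) \<and> i < a \<and> j < b then 1 else 0)"

definition lin_ext :: "nat \<Rightarrow> nat \<Rightarrow> (nat \<Rightarrow> nat \<Rightarrow> coeffs) \<Rightarrow> coeffs \<Rightarrow> coeffs" where
  "lin_ext a b F m = (\<lambda>q. \<Sum>(i, j)\<in>box a b. m (i, j) * F i j q)"

definition brX :: "nat \<Rightarrow> nat \<Rightarrow> int \<Rightarrow> coeffs \<Rightarrow> coeffs" where
  "brX a b \<alpha> = lin_ext a b (\<lambda>i j. (\<lambda>q. - of_int (int j + \<alpha>) * mon a b (i + 1) j q))"

definition brY :: "nat \<Rightarrow> nat \<Rightarrow> int \<Rightarrow> coeffs \<Rightarrow> coeffs" where
  "brY a b \<beta> = lin_ext a b (\<lambda>i j. (\<lambda>q. of_int (int i - \<beta>) * mon a b i (j + 1) q))"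

definition mulX :: "nat \<Rightarrow> nat \<Rightarrow> coeffs \<Rightarrow> coeffs" where
  "mulX a b = lin_ext a b (\<lambda>i j. mon a b (i + 1) j)"

definition mulY :: "nat \<Rightarrow> nat \<Rightarrow> coeffs \<Rightarrow> coeffs" where
  "mulY a b = lin_ext a b (\<lambda>i j. mon a b i (j + 1))"

text \<open>Boundary maps.  d1(m dX + n dY) = {m,X} + {n,Y};
  d2(m dX\<and>dY) = {m,X} dY - {m,Y} dX - (mX dY + mY dX), returned as (dX-part, dY-part).\<close>
definition bd1 :: "nat \<Rightarrow> nat \<Rightarrow> int \<Rightarrow> int \<Rightarrow> coeffs \<times> coeffs \<Rightarrow> coeffs" where
  "bd1 a b \<alpha> \<beta> w = (\<lambda>q. brX a b \<alpha> (fst w) q + brY a b \<beta> (snd w) q)"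

definition bd2 :: "nat \<Rightarrow> nat \<Rightarrow> int \<Rightarrow> int \<Rightarrow> coeffs \<Rightarrow> coeffs \<times> coeffs" where
  "bd2 a b \<alpha> \<beta> m =
     ((\<lambda>q. - brY a b \<beta> m q - mulY a b m q),
      (\<lambda>q. brX a b \<alpha> m q - mulX a b m q))"

definition clinear_on :: "coeffs set \<Rightarrow> (coeffs \<Rightarrow> complex) \<Rightarrow> bool" where
  "clinear_on S \<phi> \<longleftrightarrow>
     (\<forall>x\<in>S. \<forall>y\<in>S. \<phi> (\<lambda>p. x p + y p) = \<phi> x + \<phi> y) \<and>
     (\<forall>c. \<forall>x\<in>S. \<phi> (\<lambda>p. c * x p) = c * \<phi> x)"

end

theory Submission
  imports Defs
begin

lemma finite_box: "finite (box a b)"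
proof -
  have "box a b \<subseteq> {..<a} \<times> {..<b}" by (auto simp: box_def)
  thus ?thesis by (rule finite_subset) auto
qed

lemma lin_shiftX:
  "lin_ext a b (\<lambda>i j q. G i j * mon a b (i+1) j q) m (i', j') =
   (if 0 < i' \<and> i' < a \<and> j' < b then m (i'-1, j') * G (i'-1) j' else 0)"
proof -
  have "lin_ext a b (\<lambda>i j q. G i j * mon a b (i+1) j q) m (i', j') =
        (\<Sum>p\<in>box a b. if p = (i'-1, j') \<and> 0 < i' \<and> i' < a \<and> j' < b
                       then m (i'-1, j') * G (i'-1) j' else 0)"
    unfolding lin_ext_def
    by (rule sum.cong) (auto simp: mon_def box_def split: if_splits)
  also have "\<dots> = (if 0 < i' \<and> i' < a \<and> j' < b then m (i'-1, j') * G (i'-1) j' else 0)"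
    using finite_box[of a b] by (auto simp: box_def sum.delta')
  finally show ?thesis .
qed

lemma lin_shiftY:
  "lin_ext a b (\<lambda>i j q. G i j * mon a b i (j+1) q) m (i', j') =
   (if i' < a \<and> 0 < j' \<and> j' < b then m (i', j'-1) * G i' (j'-1) else 0)"
proof -
  have "lin_ext a b (\<lambda>i j q. G i j * mon a b i (j+1) q) m (i', j') =
        (\<Sum>p\<in>box a b. if p = (i', j'-1) \<and> i' < a \<and> 0 < j' \<and> j' < b
                       then m (i', j'-1) * G i' (j'-1) else 0)"
    unfolding lin_ext_def
    by (rule sum.cong) (auto simp: mon_def box_def split: if_splits)
  also have "\<dots> = (if i' < a \<and> 0 < j' \<and> j' < b then m (i', j'-1) * G i' (j'-1) else 0)"
    using finite_box[of a b] by (auto simp: box_def sum.delta')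
  finally show ?thesis .
qed

lemma brX_eq: "brX a b \<alpha> m (i', j') =
   (if 0 < i' \<and> i' < a \<and> j' < b then m (i'-1, j') * (- of_int (int j' + \<alpha>)) else 0)"
  unfolding brX_def using lin_shiftX[where G="\<lambda>i j. - of_int (int j + \<alpha>)"] by simp

lemma brY_eq: "brY a b \<beta> m (i', j') =
   (if i' < a \<and> 0 < j' \<and> j' < b then m (i', j'-1) * (of_int (int i' - \<beta>)) else 0)"
  unfolding brY_def using lin_shiftY[where G="\<lambda>i j. of_int (int i - \<beta>)"] by simp

lemma mulX_eq: "mulX a b m (i', j') =
   (if 0 < i' \<and> i' < a \<and> j' < b then m (i'-1, j') else 0)"
  using lin_shiftX[where G="\<lambda>i j. 1" and a=a and b=b and m=m and i'=i' and j'=j']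
  unfolding mulX_def by simp

theorem mainTheorem6:
  fixes a b :: nat and \<alpha> \<beta> :: int
  assumes "a \<ge> 2" and "b \<ge> 2"
    and "\<alpha> < - int b + 1" and "\<beta> > int a - 1"
  shows "(\<exists>\<phi>. clinear_on (Mcar a b) \<phi> \<and> \<phi> ` Mcar a b = UNIV \<and>
             {m \<in> Mcar a b. \<phi> m = 0} = bd1 a b \<alpha> \<beta> ` Om1car a b)
         \<and> (\<forall>m \<in> Om2car a b. bd2 a b \<alpha> \<beta> m = ((\<lambda>_. 0), (\<lambda>_. 0)) \<longrightarrow> m = (\<lambda>_. 0))"
proof
  have nzX: "(of_int (int j + \<alpha>) :: complex) \<noteq> 0" if "j < b" for j
  proof -
    have "int j + \<alpha> \<noteq> 0" using that assms by simp
    thus ?thesis by (metis of_int_eq_0_iff)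
  qed
  have nzY: "(of_int (int i - \<beta>) :: complex) \<noteq> 0" if "i < a" for i
  proof -
    have "int i - \<beta> \<noteq> 0" using that assms by simp
    thus ?thesis by (metis of_int_eq_0_iff)
  qed
  let ?\<phi> = "\<lambda>m::coeffs. m (0, 0)"
  have lin: "clinear_on (Mcar a b) ?\<phi>" by (simp add: clinear_on_def)
  have surj: "?\<phi> ` Mcar a b = UNIV"
  proof (rule set_eqI, rule iffI)
    fix c :: complex
    let ?m = "\<lambda>p::nat\<times>nat. if p = (0,0) then c else 0"
    have "?m \<in> Mcar a b" using assms
      by (auto simp: Mcar_def supported_in_def box_def)
    moreover have "c = ?\<phi> ?m" by simp
    ultimately show "c \<in> ?\<phi> ` Mcar a b" by (intro image_eqI[where x="?m"]) simp_all
  qed simp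
  have ker: "{m \<in> Mcar a b. ?\<phi> m = 0} = bd1 a b \<alpha> \<beta> ` Om1car a b"
  proof (rule set_eqI, rule iffI)
    fix m assume "m \<in> {m \<in> Mcar a b. ?\<phi> m = 0}"
    hence mM: "m \<in> Mcar a b" and m0: "m (0,0) = 0" by auto
    have mz: "m (i,j) = 0" if "\<not> (i < a \<and> j < b)" for i j
      using mM that by (auto simp: Mcar_def supported_in_def box_def)
    define u where "u = (\<lambda>(i::nat,j::nat). if i < a - 1 \<and> j < b then
                          m (i+1, j) / (- of_int (int j + \<alpha>)) else (0::complex))"
    define v where "v = (\<lambda>(i::nat,j). if i = 0 \<and> j < b - 1 then
                          m (0, j+1) / (of_int (0 - \<beta>)) else (0::complex))"
    have uv: "(u, v) \<in> Om1car a b"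
      using assms by (auto simp: Om1car_def supported_in_def box_def u_def v_def)
    have "bd1 a b \<alpha> \<beta> (u, v) = m"
    proof (rule ext, clarify)
      fix i j
      show "bd1 a b \<alpha> \<beta> (u, v) (i, j) = m (i, j)"
      proof (cases "i < a \<and> j < b")
        case False thus ?thesis by (auto simp: bd1_def brX_eq brY_eq mz)
      next
        case True
        show ?thesis
        proof (cases "0 < i")
          case True
          define c :: complex where "c = - of_int (int j + \<alpha>)"
          have c0: "c \<noteq> 0" using nzX[of j] \<open>i < a \<and> j < b\<close> unfolding c_def by (metis neg_equal_0_iff_equal)
          have "u (i - 1, j) = m (i, j) / c"
          proof -
            have "i - 1 < a - 1 \<and> j < b" using True \<open>i < a \<and> j < b\<close> by arith
            moreover have "i - 1 + 1 = i" using True by arith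
            ultimately show ?thesis unfolding u_def c_def by (simp only: case_prod_conv if_True simp_thms)
          qed
          moreover have "brX a b \<alpha> u (i, j) = u (i - 1, j) * c"
            using True \<open>i < a \<and> j < b\<close> by (simp add: brX_eq c_def)
          ultimately have "brX a b \<alpha> u (i, j) = m (i, j)"
            using c0 by simp
          moreover have "brY a b \<beta> v (i, j) = 0"
            using True by (simp add: brY_eq v_def)
          ultimately show ?thesis by (simp add: bd1_def)
        next
          case False
          hence i0: "i = 0" by simp
          show ?thesis
          proof (cases "j = 0")
            case True thus ?thesis using i0 m0 by (simp add: bd1_def brX_eq brY_eq)
          next
            case False
            with i0 \<open>i < a \<and> j < b\<close> nzY[of 0] show ?thesis
              by (auto simp: bd1_def brX_eq brY_eq u_def v_def)
          qed
        qed
      qed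
    qed
    with uv show "m \<in> bd1 a b \<alpha> \<beta> ` Om1car a b" by (metis image_eqI)
  next
    fix m assume "m \<in> bd1 a b \<alpha> \<beta> ` Om1car a b"
    then obtain w where m: "m = bd1 a b \<alpha> \<beta> w" by blast
    have "m \<in> Mcar a b"
      unfolding Mcar_def supported_in_def box_def m
      by (auto simp: bd1_def brX_eq brY_eq)
    moreover have "m (0,0) = 0" unfolding m by (simp add: bd1_def brX_eq brY_eq)
    ultimately show "m \<in> {m \<in> Mcar a b. ?\<phi> m = 0}" by simp
  qed
  show "\<exists>\<phi>. clinear_on (Mcar a b) \<phi> \<and> \<phi> ` Mcar a b = UNIV \<and>
             {m \<in> Mcar a b. \<phi> m = 0} = bd1 a b \<alpha> \<beta> ` Om1car a b"
    using lin surj ker by blast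
next
  show "\<forall>m \<in> Om2car a b. bd2 a b \<alpha> \<beta> m = ((\<lambda>_. 0), (\<lambda>_. 0)) \<longrightarrow> m = (\<lambda>_. 0)"
  proof (intro ballI impI ext)
    fix m and p :: "nat \<times> nat" assume mO: "m \<in> Om2car a b" and h: "bd2 a b \<alpha> \<beta> m = ((\<lambda>_. 0), (\<lambda>_. 0))"
    obtain i j where p: "p = (i, j)" by fastforce
    show "m p = 0"
    proof (cases "i < a - 1 \<and> j < b - 1")
      case False thus ?thesis using mO by (auto simp: p Om2car_def supported_in_def box_def)
    next
      case True
      have "snd (bd2 a b \<alpha> \<beta> m) (i+1, j) = 0" using h by simp
      hence e: "brX a b \<alpha> m (i+1, j) - mulX a b m (i+1, j) = 0"
        by (simp add: bd2_def)
      have T: "0 < i + 1 \<and> i + 1 < a \<and> j < b" using True by arith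
      have "brX a b \<alpha> m (i+1, j) = m (i, j) * (- of_int (int j + \<alpha>))"
        using T by (simp only: brX_eq if_True) simp
      moreover have "mulX a b m (i+1, j) = m (i, j)"
        using T by (simp only: mulX_eq if_True) simp
      ultimately have "m (i, j) * (- of_int (int j + \<alpha>)) - m (i, j) = 0"
        using e by simp
      hence "m (i, j) * (of_int (int j + \<alpha> + 1)) = 0"
        by (simp add: algebra_simps) (metis add.commute add.left_commute add_eq_0_iff)
      moreover have "(of_int (int j + \<alpha> + 1) :: complex) \<noteq> 0"
      proof -
        have "int j + \<alpha> + 1 \<noteq> 0" using True assms by arith
        thus ?thesis by (metis of_int_eq_0_iff)
      qed
      ultimately show ?thesis by (simp add: p)
    qed
  qed
qed

end
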